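(* Let $(Y_{i\,j})_{i,j\in\mathbb N}$ be i.i.d. real random variables with $\mathbb E[Y_{1\,1}]=0$, $\mathbb E[Y_{1\,1}^2]=1$, let $l\in\mathbb N$, assume $\mathbb E[Y_{1\,1}^{2l}]<\infty$ and set $\alpha=\mathbb E[Y_{1\,1}^4]$. For $p\le n$ let $\mathbf S_{p,n}=\frac1n\mathbf X_{p,n}\mathbf X_{p,n}^T$ with $\mathbf X_{p,n}=(Y_{i\,j})_{i\le p,j\le n}$. For fixed $p\in\mathbb N$, as $n\to\infty$, $$\mathbb E[\operatorname{tr}(\mathbf S_{p,n}^l)]=p+\frac{pl}{2n}\big(\alpha(l-1)+lp-2l-p+2\big)+\mathcal O\Big(\frac1{n^2}\Big).$$ *)

theory Defs
  imports "HOL-Probability.Probability" "HOL-Library.Landau_Symbols"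
begin

text \<open>Square p x p real matrices are represented as functions nat => nat => real,
  only entries with indices below p being relevant.\<close>

definition mat_mult :: "nat \<Rightarrow> (nat \<Rightarrow> nat \<Rightarrow> real) \<Rightarrow> (nat \<Rightarrow> nat \<Rightarrow> real) \<Rightarrow> (nat \<Rightarrow> nat \<Rightarrow> real)" where
  "mat_mult p A B = (\<lambda>i k. \<Sum>m<p. A i m * B m k)"

primrec mat_pow :: "nat \<Rightarrow> (nat \<Rightarrow> nat \<Rightarrow> real) \<Rightarrow> nat \<Rightarrow> (nat \<Rightarrow> nat \<Rightarrow> real)" where
  "mat_pow p A 0 = (\<lambda>i k. if i = k then 1 else 0)"
| "mat_pow p A (Suc l) = mat_mult p (mat_pow p A l) A"

definition mat_trace :: "nat \<Rightarrow> (nat \<Rightarrow> nat \<Rightarrow> real) \<Rightarrow> real" where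
  "mat_trace p A = (\<Sum>i<p. A i i)"

definition sample_cov :: "(nat \<Rightarrow> nat \<Rightarrow> 'a \<Rightarrow> real) \<Rightarrow> nat \<Rightarrow> 'a \<Rightarrow> (nat \<Rightarrow> nat \<Rightarrow> real)" where
  "sample_cov Y n w = (\<lambda>i k. (1 / real n) * (\<Sum>j<n. Y i j w * Y k j w))"

end

theory Submission
  imports Defs
begin

primrec mp :: "nat \<Rightarrow> (nat \<Rightarrow> nat \<Rightarrow> nat \<Rightarrow> real) \<Rightarrow> nat \<Rightarrow> (nat \<Rightarrow> nat \<Rightarrow> real)" where
  "mp p Bs 0 = (\<lambda>i k. if i = k then 1 else 0)"
| "mp p Bs (Suc k) = mat_mult p (mp p Bs k) (Bs k)"

definition eqp :: "nat \<Rightarrow> (nat \<Rightarrow> nat \<Rightarrow> real) \<Rightarrow> (nat \<Rightarrow> nat \<Rightarrow> real) \<Rightarrow> bool" where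
  "eqp p A B \<longleftrightarrow> (\<forall>a<p. \<forall>b<p. A a b = B a b)"

lemma eqp_refl[simp]: "eqp p A A" by (simp add: eqp_def)
lemma eqp_sym: "eqp p A B \<Longrightarrow> eqp p B A" by (simp add: eqp_def)
lemma eqp_trans: "eqp p A B \<Longrightarrow> eqp p B C \<Longrightarrow> eqp p A C" by (simp add: eqp_def)

lemma mat_mult_eqp: "eqp p A A' \<Longrightarrow> eqp p B B' \<Longrightarrow> eqp p (mat_mult p A B) (mat_mult p A' B')"
  by (simp add: eqp_def mat_mult_def)

lemma mat_mult_assoc: "mat_mult p (mat_mult p A B) C = mat_mult p A (mat_mult p B C)"
  unfolding mat_mult_def
  by (auto simp: sum_distrib_left sum_distrib_right mult.assoc intro!: ext sum.swap)

lemma mat_mult_id_right: "eqp p (mat_mult p A (\<lambda>i k. if i = k then 1 else 0)) A"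
  unfolding eqp_def mat_mult_def
proof (intro allI impI)
  fix a b assume "b < p"
  have "(\<Sum>m<p. A a m * (if m = b then 1 else 0)) = (\<Sum>m<p. if m = b then A a b else 0)"
    by (rule sum.cong) auto
  then show "(\<Sum>m<p. A a m * (if m = b then 1 else 0)) = A a b" using \<open>b < p\<close> by simp
qed

lemma mat_trace_eqp: "eqp p A B \<Longrightarrow> mat_trace p A = mat_trace p B"
  by (simp add: eqp_def mat_trace_def)

lemma mat_trace_comm: "mat_trace p (mat_mult p A B) = mat_trace p (mat_mult p B A)"
  unfolding mat_trace_def mat_mult_def
  by (subst sum.swap) (simp add: mult.commute)

lemma mp_cong: "(\<And>t. t < k \<Longrightarrow> Bs t = Cs t) \<Longrightarrow> mp p Bs k = mp p Cs k"
  by (induction k) auto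

lemma mat_pow_mp: "mat_pow p A k = mp p (\<lambda>_. A) k"
  by (induction k) auto

lemma mp_add: "eqp p (mp p Bs (a + b)) (mat_mult p (mp p Bs a) (mp p (\<lambda>s. Bs (a + s)) b))"
proof (induction b)
  case 0
  then show ?case using mat_mult_id_right[of p "mp p Bs a"] by (simp add: eqp_sym)
next
  case (Suc b)
  have "eqp p (mp p Bs (a + Suc b)) (mat_mult p (mat_mult p (mp p Bs a) (mp p (\<lambda>s. Bs (a + s)) b)) (Bs (a+b)))"
    using mat_mult_eqp[OF Suc.IH eqp_refl] by simp
  then show ?case by (simp add: mat_mult_assoc)
qed

lemma trace_rotate:
  assumes "t0 < k"
  shows "mat_trace p (mp p Bs k) =
    mat_trace p (mp p (\<lambda>s. if s < k - Suc t0 then Bs (Suc t0 + s) else Bs (s - (k - Suc t0))) k)"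
proof -
  define a where "a = Suc t0"
  define b where "b = k - Suc t0"
  define Cs where "Cs = (\<lambda>s. if s < b then Bs (a + s) else Bs (s - b))"
  have k: "k = a + b" "k = b + a" using assms by (auto simp: a_def b_def)
  have "mat_trace p (mp p Bs k) = mat_trace p (mat_mult p (mp p Bs a) (mp p (\<lambda>s. Bs (a + s)) b))"
    using mat_trace_eqp[OF mp_add[of p Bs a b]] by (simp only: k(1))
  also have "\<dots> = mat_trace p (mat_mult p (mp p (\<lambda>s. Bs (a + s)) b) (mp p Bs a))"
    by (rule mat_trace_comm)
  also have "mp p (\<lambda>s. Bs (a + s)) b = mp p Cs b"
    by (rule mp_cong) (simp add: Cs_def)
  also have "mp p Bs a = mp p (\<lambda>s. Cs (b + s)) a"
    by (rule mp_cong) (simp add: Cs_def)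
  also have "mat_trace p (mat_mult p (mp p Cs b) (mp p (\<lambda>s. Cs (b + s)) a)) = mat_trace p (mp p Cs (b + a))"
    using mat_trace_eqp[OF mp_add[of p Cs b a]] by simp
  finally have calc: "mat_trace p (mp p Bs k) = mat_trace p (mp p Cs (b + a))" .
  have "(\<lambda>s. if s < k - Suc t0 then Bs (Suc t0 + s) else Bs (s - (k - Suc t0))) = Cs"
    unfolding Cs_def a_def b_def by (rule refl)
  then show ?thesis using calc k(2) by simp
qed

lemma sum_PiE_Suc:
  "(\<Sum>js\<in>PiE {..<Suc k} (\<lambda>_. A). f js) = (\<Sum>js\<in>PiE {..<k} (\<lambda>_. A). \<Sum>j\<in>A. f (js(k := j)))"
proof -
  have "PiE {..<Suc k} (\<lambda>_. A) = (\<lambda>(y, g). g(k := y)) ` (A \<times> PiE {..<k} (\<lambda>_. A))"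
    using PiE_insert_eq[of k "{..<k}" "\<lambda>_. A"] by (simp add: lessThan_Suc)
  then have "(\<Sum>js\<in>PiE {..<Suc k} (\<lambda>_. A). f js) = (\<Sum>x\<in>A \<times> PiE {..<k} (\<lambda>_. A). f ((\<lambda>(y, g). g(k := y)) x))"
    by (simp add: sum.reindex inj_combinator[of k "{..<k}" "\<lambda>_. A"])
  also have "\<dots> = (\<Sum>j\<in>A. \<Sum>js\<in>PiE {..<k} (\<lambda>_. A). f (js(k := j)))"
    by (simp add: sum.cartesian_product split_beta')
  also have "\<dots> = (\<Sum>js\<in>PiE {..<k} (\<lambda>_. A). \<Sum>j\<in>A. f (js(k := j)))"
    by (rule sum.swap)
  finally show ?thesis .
qed

lemma mp_upd_last: "mp p (\<lambda>t. Zs ((js(k := j)) t)) (Suc k) = mat_mult p (mp p (\<lambda>t. Zs (js t)) k) (Zs j)"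
proof -
  have "mp p (\<lambda>t. Zs ((js(k := j)) t)) k = mp p (\<lambda>t. Zs (js t)) k" by (rule mp_cong) simp
  then show ?thesis by simp
qed

lemma mat_pow_expand:
  "mat_pow p (\<lambda>a b. c * (\<Sum>j<n. Zs j a b)) k =
   (\<lambda>a b. c ^ k * (\<Sum>js\<in>PiE {..<k} (\<lambda>_. {..<n}). mp p (\<lambda>t. Zs (js t)) k a b))"
proof (induction k)
  case 0
  then show ?case by (auto intro!: ext)
next
  case (Suc k)
  show ?case
  proof (intro ext)
    fix a b
    have "mat_pow p (\<lambda>a b. c * (\<Sum>j<n. Zs j a b)) (Suc k) a b =
      (\<Sum>m<p. (c ^ k * (\<Sum>js\<in>PiE {..<k} (\<lambda>_. {..<n}). mp p (\<lambda>t. Zs (js t)) k a m)) * (c * (\<Sum>j<n. Zs j m b)))"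
      by (simp add: Suc.IH mat_mult_def)
    also have "\<dots> = c ^ Suc k * (\<Sum>m<p. (\<Sum>js\<in>PiE {..<k} (\<lambda>_. {..<n}). mp p (\<lambda>t. Zs (js t)) k a m) * (\<Sum>j<n. Zs j m b))"
      unfolding sum_distrib_left[of "c ^ Suc k"] by (rule sum.cong) (simp_all add: mult_ac)
    also have "\<dots> = c ^ Suc k * (\<Sum>m<p. \<Sum>js\<in>PiE {..<k} (\<lambda>_. {..<n}). \<Sum>j<n. mp p (\<lambda>t. Zs (js t)) k a m * Zs j m b)"
      by (simp only: sum_product)
    also have "\<dots> = c ^ Suc k * (\<Sum>js\<in>PiE {..<k} (\<lambda>_. {..<n}). \<Sum>m<p. \<Sum>j<n. mp p (\<lambda>t. Zs (js t)) k a m * Zs j m b)"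
      by (subst sum.swap) (rule refl)
    also have "\<dots> = c ^ Suc k * (\<Sum>js\<in>PiE {..<k} (\<lambda>_. {..<n}). \<Sum>j<n. \<Sum>m<p. mp p (\<lambda>t. Zs (js t)) k a m * Zs j m b)"
      by (subst (2) sum.swap) (rule refl)
    also have "\<dots> = c ^ Suc k * (\<Sum>js\<in>PiE {..<k} (\<lambda>_. {..<n}). \<Sum>j<n. mp p (\<lambda>t. Zs ((js(k := j)) t)) (Suc k) a b)"
      by (simp only: mp_upd_last) (simp add: mat_mult_def)
    also have "\<dots> = c ^ Suc k * (\<Sum>js\<in>PiE {..<Suc k} (\<lambda>_. {..<n}). mp p (\<lambda>t. Zs (js t)) (Suc k) a b)"
      by (simp add: sum_PiE_Suc)
    finally show "mat_pow p (\<lambda>a b. c * (\<Sum>j<n. Zs j a b)) (Suc k) a b = c ^ Suc k * (\<Sum>js\<in>PiE {..<Suc k} (\<lambda>_. {..<n}). mp p (\<lambda>t. Zs (js t)) (Suc k) a b)" .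
  qed
qed

lemma pascal_sum:
  fixes x :: "nat \<Rightarrow> real"
  shows "(\<Sum>k\<le>Suc l. of_nat (Suc l choose k) * x k) =
         (\<Sum>k\<le>l. of_nat (l choose k) * x k) + (\<Sum>k\<le>l. of_nat (l choose k) * x (Suc k))"
proof -
  have "(\<Sum>k\<le>Suc l. of_nat (Suc l choose k) * x k) = x 0 + (\<Sum>k\<le>l. of_nat (Suc l choose Suc k) * x (Suc k))"
    by (subst sum.atMost_Suc_shift) simp
  also have "\<dots> = x 0 + (\<Sum>k\<le>l. of_nat (l choose k) * x (Suc k)) + (\<Sum>k\<le>l. of_nat (l choose Suc k) * x (Suc k))"
    by (simp only: binomial_Suc_Suc of_nat_add distrib_right sum.distrib add.assoc)
  also have "(\<Sum>k\<le>l. of_nat (l choose k) * x k) = x 0 + (\<Sum>k\<le>l. of_nat (l choose Suc k) * x (Suc k))"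
  proof (cases l)
    case 0 then show ?thesis by simp
  next
    case (Suc l')
    have "(\<Sum>k\<le>l. of_nat (l choose k) * x k) = x 0 + (\<Sum>k\<le>l'. of_nat (l choose Suc k) * x (Suc k))"
      unfolding Suc by (subst sum.atMost_Suc_shift) simp
    moreover have "(\<Sum>k\<le>l. of_nat (l choose Suc k) * x (Suc k)) = (\<Sum>k\<le>l'. of_nat (l choose Suc k) * x (Suc k))"
      unfolding Suc by (simp add: sum.atMost_Suc binomial_eq_0)
    ultimately show ?thesis by simp
  qed
  ultimately show ?thesis by simp
qed

lemma mat_pow_binomial:
  "eqp p (mat_pow p (\<lambda>a b. (if a = b then 1 else 0) + D a b) l)
         (\<lambda>a b. \<Sum>k\<le>l. of_nat (l choose k) * mat_pow p D k a b)"
proof (induction l)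
  case 0
  then show ?case by (simp add: eqp_def)
next
  case (Suc l)
  show ?case unfolding eqp_def
  proof (intro allI impI)
    fix a b assume ab: "a < p" "b < p"
    let ?X = "\<lambda>a b. (if a = b then 1 else 0) + D a b"
    have "mat_pow p ?X (Suc l) a b = (\<Sum>m<p. mat_pow p ?X l a m * ?X m b)"
      by (simp add: mat_mult_def)
    also have "\<dots> = (\<Sum>m<p. (\<Sum>k\<le>l. of_nat (l choose k) * mat_pow p D k a m) * ?X m b)"
      using Suc.IH ab by (intro sum.cong) (auto simp: eqp_def)
    also have "\<dots> = (\<Sum>k\<le>l. of_nat (l choose k) * (\<Sum>m<p. mat_pow p D k a m * ?X m b))"
      by (simp only: sum_distrib_right sum_distrib_left mult.assoc) (rule sum.swap)
    also have "\<dots> = (\<Sum>k\<le>l. of_nat (l choose k) * (mat_pow p D k a b + mat_pow p D (Suc k) a b))"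
    proof (rule sum.cong[OF refl])
      fix k
      have "(\<Sum>m<p. mat_pow p D k a m * ?X m b) = (\<Sum>m<p. (if m = b then mat_pow p D k a b else 0)) + (\<Sum>m<p. mat_pow p D k a m * D m b)"
        by (subst sum.distrib[symmetric]) (rule sum.cong, auto simp: algebra_simps)
      also have "\<dots> = mat_pow p D k a b + mat_pow p D (Suc k) a b"
        using ab by (simp add: mat_mult_def)
      finally show "of_nat (l choose k) * (\<Sum>m<p. mat_pow p D k a m * ?X m b) = of_nat (l choose k) * (mat_pow p D k a b + mat_pow p D (Suc k) a b)"
        by simp
    qed
    also have "\<dots> = (\<Sum>k\<le>Suc l. of_nat (Suc l choose k) * mat_pow p D k a b)"
      by (subst pascal_sum) (simp add: sum.distrib algebra_simps)
    finally show "mat_pow p ?X (Suc l) a b = (\<Sum>k\<le>Suc l. of_nat (Suc l choose k) * mat_pow p D k a b)" .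
  qed
qed

lemma mat_trace_sum: "mat_trace p (\<lambda>a b. \<Sum>x\<in>S. f x a b) = (\<Sum>x\<in>S. mat_trace p (f x))"
  unfolding mat_trace_def by (rule sum.swap)

definition Zm :: "(nat \<times> nat \<Rightarrow> real) \<Rightarrow> nat \<Rightarrow> nat \<Rightarrow> nat \<Rightarrow> real" where
  "Zm y j a b = y (a, j) * y (b, j) - (if a = b then 1 else 0)"

definition Nrm :: "nat \<Rightarrow> (nat \<Rightarrow> nat \<Rightarrow> real) \<Rightarrow> real" where
  "Nrm p B = (\<Sum>a<p. \<Sum>b<p. \<bar>B a b\<bar>)"

lemma Nrm_nonneg: "0 \<le> Nrm p B"
  unfolding Nrm_def by (intro sum_nonneg) auto

lemma mp_bound:
  assumes "a < p" "b < p"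
  shows "\<bar>mp p Bs k a b\<bar> \<le> (\<Prod>t<k. Nrm p (Bs t))"
  using assms(2)
proof (induction k arbitrary: b)
  case 0
  then show ?case by simp
next
  case (Suc k)
  have P: "0 \<le> (\<Prod>t<k. Nrm p (Bs t))" by (intro prod_nonneg) (simp add: Nrm_nonneg)
  have "\<bar>mp p Bs (Suc k) a b\<bar> = \<bar>\<Sum>m<p. mp p Bs k a m * Bs k m b\<bar>"
    by (simp add: mat_mult_def)
  also have "\<dots> \<le> (\<Sum>m<p. \<bar>mp p Bs k a m\<bar> * \<bar>Bs k m b\<bar>)"
    by (rule order_trans[OF sum_abs]) (simp add: abs_mult)
  also have "\<dots> \<le> (\<Sum>m<p. (\<Prod>t<k. Nrm p (Bs t)) * \<bar>Bs k m b\<bar>)"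
    by (intro sum_mono mult_right_mono Suc.IH) auto
  also have "\<dots> = (\<Prod>t<k. Nrm p (Bs t)) * (\<Sum>m<p. \<bar>Bs k m b\<bar>)"
    by (simp add: sum_distrib_left)
  also have "(\<Sum>m<p. \<bar>Bs k m b\<bar>) \<le> Nrm p (Bs k)"
    unfolding Nrm_def
    by (intro sum_mono member_le_sum[where f = "\<lambda>b'. \<bar>Bs k _ b'\<bar>"]) (use Suc.prems in auto)
  then have "(\<Prod>t<k. Nrm p (Bs t)) * (\<Sum>m<p. \<bar>Bs k m b\<bar>) \<le> (\<Prod>t<k. Nrm p (Bs t)) * Nrm p (Bs k)"
    using P by (rule mult_left_mono)
  finally show ?case by simp
qed

lemma Zm_nrm: "Nrm p (Zm y j) \<le> (\<Sum>a<p. 1 + \<bar>y (a, j)\<bar>) ^ 2"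
proof -
  have "Nrm p (Zm y j) \<le> (\<Sum>a<p. \<Sum>b<p. (1 + \<bar>y (a, j)\<bar>) * (1 + \<bar>y (b, j)\<bar>))"
    unfolding Nrm_def Zm_def
  proof (intro sum_mono)
    fix a b
    have "\<bar>y (a, j) * y (b, j) - (if a = b then 1 else 0)\<bar> \<le> \<bar>y (a, j) * y (b, j)\<bar> + \<bar>(if a = b then 1 else 0)\<bar>"
      by (rule abs_triangle_ineq4)
    also have "\<dots> \<le> \<bar>y (a, j)\<bar> * \<bar>y (b, j)\<bar> + 1"
      by (simp add: abs_mult)
    also have "\<dots> \<le> (1 + \<bar>y (a, j)\<bar>) * (1 + \<bar>y (b, j)\<bar>)"
      by (simp add: algebra_simps)
    finally show "\<bar>y (a, j) * y (b, j) - (if a = b then 1 else 0)\<bar> \<le> (1 + \<bar>y (a, j)\<bar>) * (1 + \<bar>y (b, j)\<bar>)" .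
  qed
  also have "\<dots> = (\<Sum>a<p. 1 + \<bar>y (a, j)\<bar>) ^ 2"
    by (simp add: power2_eq_square sum_product)
  finally show ?thesis .
qed

lemma prod_le_sum_pow:
  fixes x :: "'b \<Rightarrow> real"
  assumes "finite S" "\<And>t. t \<in> S \<Longrightarrow> 0 \<le> x t"
  shows "(\<Prod>t\<in>S. x t) \<le> 1 + (\<Sum>t\<in>S. x t ^ card S)"
proof (cases "S = {}")
  case True
  then show ?thesis by simp
next
  case False
  define M where "M = Max (x ` S)"
  have M: "M \<in> x ` S" using assms(1) False by (simp add: M_def)
  have le: "x t \<le> M" if "t \<in> S" for t using assms(1) that by (simp add: M_def)
  obtain t0 where "t0 \<in> S" "M = x t0" using M by auto
  moreover have "x t0 ^ card S \<le> (\<Sum>t\<in>S. x t ^ card S)"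
    by (rule member_le_sum) (use assms \<open>t0 \<in> S\<close> in auto)
  ultimately have Mb: "M ^ card S \<le> (\<Sum>t\<in>S. x t ^ card S)" by simp
  have "(\<Prod>t\<in>S. x t) \<le> (\<Prod>t\<in>S. M)"
    by (intro prod_mono) (use assms le in auto)
  also have "\<dots> = M ^ card S" by simp
  also note Mb
  finally show ?thesis by simp
qed

lemma sum_pow_le:
  fixes x :: "'b \<Rightarrow> real"
  assumes "finite A" "\<And>a. a \<in> A \<Longrightarrow> 0 \<le> x a" "m \<ge> 1"
  shows "(\<Sum>a\<in>A. x a) ^ m \<le> real (card A) ^ m * (\<Sum>a\<in>A. x a ^ m)"
proof (cases "A = {}")
  case True
  then show ?thesis using assms by (simp add: power_0_left)
next
  case False
  define M where "M = Max (x ` A)"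
  have M: "M \<in> x ` A" using assms(1) False by (simp add: M_def)
  have le: "x t \<le> M" if "t \<in> A" for t using assms(1) that by (simp add: M_def)
  have M0: "0 \<le> M" using M assms(2) by auto
  obtain t0 where "t0 \<in> A" "M = x t0" using M by auto
  moreover have "x t0 ^ m \<le> (\<Sum>a\<in>A. x a ^ m)"
    by (rule member_le_sum) (use assms \<open>t0 \<in> A\<close> in auto)
  ultimately have Mb: "M ^ m \<le> (\<Sum>a\<in>A. x a ^ m)" by simp
  have "(\<Sum>a\<in>A. x a) \<le> (\<Sum>a\<in>A. M)" by (intro sum_mono le)
  also have "\<dots> = real (card A) * M" by simp
  finally have "(\<Sum>a\<in>A. x a) ^ m \<le> (real (card A) * M) ^ m"
    by (intro power_mono) (auto intro: sum_nonneg assms(2))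
  also have "\<dots> = real (card A) ^ m * M ^ m" by (simp add: power_mult_distrib)
  also have "real (card A) ^ m * M ^ m \<le> real (card A) ^ m * (\<Sum>a\<in>A. x a ^ m)"
    using Mb by (intro mult_left_mono) auto
  finally show ?thesis .
qed

definition Gb :: "nat \<Rightarrow> (nat \<times> nat \<Rightarrow> real) \<Rightarrow> (nat \<Rightarrow> nat) \<Rightarrow> nat \<Rightarrow> real" where
  "Gb p y js k = 1 + (\<Sum>t<k. real p ^ (2*k) * (\<Sum>i<p. (1 + \<bar>y (i, js t)\<bar>) ^ (2*k)))"

lemma mp_Zm_bound:
  assumes "a < p" "b < p"
  shows "\<bar>mp p (\<lambda>t. Zm y (js t)) k a b\<bar> \<le> Gb p y js k"
proof -
  define V where "V t = (\<Sum>i<p. 1 + \<bar>y (i, js t)\<bar>)" for t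
  have V0: "0 \<le> V t" for t unfolding V_def by (intro sum_nonneg) auto
  have "\<bar>mp p (\<lambda>t. Zm y (js t)) k a b\<bar> \<le> (\<Prod>t<k. Nrm p (Zm y (js t)))"
    by (rule mp_bound[OF assms])
  also have "\<dots> \<le> (\<Prod>t<k. V t ^ 2)"
    by (intro prod_mono conjI Nrm_nonneg) (simp add: V_def Zm_nrm)
  also have "\<dots> \<le> 1 + (\<Sum>t<k. (V t ^ 2) ^ card {..<k})"
    by (rule prod_le_sum_pow) auto
  also have "\<dots> \<le> 1 + (\<Sum>t<k. real p ^ (2*k) * (\<Sum>i<p. (1 + \<bar>y (i, js t)\<bar>) ^ (2*k)))"
  proof -
    have "(V t ^ 2) ^ card {..<k} \<le> real p ^ (2*k) * (\<Sum>i<p. (1 + \<bar>y (i, js t)\<bar>) ^ (2*k))" if "t < k" for t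
    proof -
      have "(V t ^ 2) ^ card {..<k} = V t ^ (2 * k)" by (simp add: power_mult)
      also have "\<dots> \<le> real (card {..<p}) ^ (2*k) * (\<Sum>i<p. (1 + \<bar>y (i, js t)\<bar>) ^ (2*k))"
        unfolding V_def by (rule sum_pow_le) (use that in auto)
      finally show ?thesis by simp
    qed
    then show ?thesis by (intro add_left_mono sum_mono) auto
  qed
  finally show ?thesis by (simp add: Gb_def)
qed

lemma mp_Zm_measurable:
  assumes "\<And>x. (\<lambda>\<omega>. y \<omega> x) \<in> borel_measurable N"
  shows "(\<lambda>\<omega>. mp p (\<lambda>t. Zm (y \<omega>) (js t)) k a b) \<in> borel_measurable N"
proof (induction k arbitrary: b)
  case 0
  then show ?case by simp
next
  case (Suc k)
  have Zmeas: "(\<lambda>\<omega>. Zm (y \<omega>) (js k) m b) \<in> borel_measurable N" for m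
    unfolding Zm_def by (intro borel_measurable_diff borel_measurable_times assms) auto
  show ?case
    unfolding mp.simps mat_mult_def
    by (intro borel_measurable_sum borel_measurable_times Suc.IH Zmeas)
qed

lemma Gb_measurable:
  assumes "\<And>x. (\<lambda>\<omega>. y \<omega> x) \<in> borel_measurable N"
  shows "(\<lambda>\<omega>. Gb p (y \<omega>) js k) \<in> borel_measurable N"
  unfolding Gb_def
  by (intro borel_measurable_add borel_measurable_sum borel_measurable_times borel_measurable_power
      borel_measurable_abs assms) auto

definition pairY :: "(nat \<Rightarrow> nat \<Rightarrow> 'a \<Rightarrow> real) \<Rightarrow> 'a \<Rightarrow> nat \<times> nat \<Rightarrow> real" where
  "pairY Y w x = (case x of (i, j) \<Rightarrow> Y i j w)"

lemma pairY_simp[simp]: "pairY Y w (i, j) = Y i j w"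
  by (simp add: pairY_def)

definition Tr :: "nat \<Rightarrow> (nat \<times> nat \<Rightarrow> real) \<Rightarrow> (nat \<Rightarrow> nat) \<Rightarrow> nat \<Rightarrow> real" where
  "Tr p y js k = mat_trace p (mp p (\<lambda>t. Zm y (js t)) k)"

lemma pow_bound_aux:
  fixes y :: real
  assumes "m \<le> 2 * q"
  shows "(1 + \<bar>y\<bar>) ^ m \<le> 2 ^ m * (1 + y ^ (2 * q))"
proof -
  have ev: "0 \<le> y ^ (2 * q)" by (simp add: power_mult)
  show ?thesis
  proof (cases "\<bar>y\<bar> \<le> 1")
    case True
    have "(1 + \<bar>y\<bar>) ^ m \<le> 2 ^ m" using True by (intro power_mono) auto
    also have "\<dots> \<le> 2 ^ m * (1 + y ^ (2 * q))" using ev by simp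
    finally show ?thesis .
  next
    case False
    have yy: "\<bar>y\<bar> ^ m \<le> y ^ (2 * q)"
    proof -
      have "\<bar>y\<bar> ^ m \<le> \<bar>y\<bar> ^ (2 * q)" using False assms by (intro power_increasing) auto
      also have "\<bar>y\<bar> ^ (2 * q) = y ^ (2 * q)" by (simp add: power_mult power2_abs)
      finally show ?thesis .
    qed
    have "(1 + \<bar>y\<bar>) ^ m \<le> (2 * \<bar>y\<bar>) ^ m" using False by (intro power_mono) auto
    also have "\<dots> = 2 ^ m * \<bar>y\<bar> ^ m" by (simp add: power_mult_distrib)
    also have "\<dots> \<le> 2 ^ m * y ^ (2 * q)" using yy by (intro mult_left_mono) auto
    finally have "(1 + \<bar>y\<bar>) ^ m \<le> 2 ^ m * y ^ (2 * q)" .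
    moreover have "(0::real) \<le> 2 ^ m" by simp
    ultimately show ?thesis by (simp only: distrib_left mult_1_right)
  qed
qed

locale setting = prob_space M for M :: "'a measure" +
  fixes Y :: "nat \<Rightarrow> nat \<Rightarrow> 'a \<Rightarrow> real" and l :: nat
  assumes rv: "\<And>i j. Y i j \<in> borel_measurable M"
    and indep: "indep_vars (\<lambda>_. borel) (\<lambda>(i, j). Y i j) UNIV"
    and ident: "\<And>i j. distr M borel (Y i j) = distr M borel (Y 0 0)"
    and mean: "expectation (Y 0 0) = 0"
    and var: "expectation (\<lambda>w. (Y 0 0 w)^2) = 1"
    and sq_int: "integrable M (\<lambda>w. (Y 0 0 w)^2)"
    and mom: "integrable M (\<lambda>w. (Y 0 0 w)^(2*l))"
begin

lemma coord_meas: "(\<lambda>w. pairY Y w x) \<in> borel_measurable M"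
  by (cases x) (simp add: rv)

lemma ident_integral:
  fixes g :: "real \<Rightarrow> real"
  assumes g: "g \<in> borel_measurable borel"
  shows "expectation (\<lambda>w. g (Y i j w)) = expectation (\<lambda>w. g (Y 0 0 w))"
    and "integrable M (\<lambda>w. g (Y i j w)) \<longleftrightarrow> integrable M (\<lambda>w. g (Y 0 0 w))"
proof -
  show "expectation (\<lambda>w. g (Y i j w)) = expectation (\<lambda>w. g (Y 0 0 w))"
    using integral_distr[OF rv[of i j] g] integral_distr[OF rv[of 0 0] g] ident[of i j] by simp
  show "integrable M (\<lambda>w. g (Y i j w)) \<longleftrightarrow> integrable M (\<lambda>w. g (Y 0 0 w))"
    using integrable_distr_eq[OF rv[of i j] g] integrable_distr_eq[OF rv[of 0 0] g] ident[of i j] by simp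
qed

definition mu :: "nat \<Rightarrow> real" where
  "mu m = expectation (\<lambda>w. (1 + \<bar>Y 0 0 w\<bar>) ^ m)"

lemma mom_int:
  assumes "m \<le> 2 * l"
  shows "integrable M (\<lambda>w. (1 + \<bar>Y i j w\<bar>) ^ m)"
    and "expectation (\<lambda>w. (1 + \<bar>Y i j w\<bar>) ^ m) = mu m"
proof -
  have g: "(\<lambda>x::real. (1 + \<bar>x\<bar>) ^ m) \<in> borel_measurable borel" by measurable
  have "integrable M (\<lambda>w. (1 + \<bar>Y 0 0 w\<bar>) ^ m)"
  proof (rule Bochner_Integration.integrable_bound)
    show "integrable M (\<lambda>w. 2 ^ m * (1 + (Y 0 0 w) ^ (2 * l)))"
      using mom by (intro Bochner_Integration.integrable_mult_right Bochner_Integration.integrable_add) auto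
    show "(\<lambda>w. (1 + \<bar>Y 0 0 w\<bar>) ^ m) \<in> borel_measurable M" using rv by measurable
    show "AE x in M. norm ((1 + \<bar>Y 0 0 x\<bar>) ^ m) \<le> norm (2 ^ m * (1 + Y 0 0 x ^ (2 * l)))"
    proof (rule AE_I2)
      fix x
      have ev: "0 \<le> Y 0 0 x ^ (2 * l)" by (simp add: power_mult)
      show "norm ((1 + \<bar>Y 0 0 x\<bar>) ^ m) \<le> norm (2 ^ m * (1 + Y 0 0 x ^ (2 * l)))"
        using pow_bound_aux[OF assms, of "Y 0 0 x"] ev by simp
    qed
  qed
  then show "integrable M (\<lambda>w. (1 + \<bar>Y i j w\<bar>) ^ m)"
    using ident_integral(2)[OF g, of i j] by simp
  show "expectation (\<lambda>w. (1 + \<bar>Y i j w\<bar>) ^ m) = mu m"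
    using ident_integral(1)[OF g, of i j] by (simp add: mu_def)
qed

definition Cb :: "nat \<Rightarrow> nat \<Rightarrow> real" where
  "Cb p k = 1 + real k * real p ^ (2 * k) * (real p * mu (2 * k))"

lemma Gb_int:
  assumes "k \<le> l"
  shows "integrable M (\<lambda>w. Gb p (pairY Y w) js k)"
    and "expectation (\<lambda>w. Gb p (pairY Y w) js k) = Cb p k"
proof -
  have I: "integrable M (\<lambda>w. (1 + \<bar>Y i (js t) w\<bar>) ^ (2 * k))" for i t
    using mom_int(1)[of "2*k"] assms by simp
  have E: "expectation (\<lambda>w. (1 + \<bar>Y i (js t) w\<bar>) ^ (2 * k)) = mu (2 * k)" for i t
    using mom_int(2)[of "2*k"] assms by simp
  show "integrable M (\<lambda>w. Gb p (pairY Y w) js k)"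
    unfolding Gb_def pairY_simp using I by (intro Bochner_Integration.integrable_add Bochner_Integration.integrable_sum Bochner_Integration.integrable_mult_right) auto
  have "expectation (\<lambda>w. Gb p (pairY Y w) js k) =
      1 + (\<Sum>t<k. real p ^ (2*k) * (\<Sum>i<p. expectation (\<lambda>w. (1 + \<bar>Y i (js t) w\<bar>) ^ (2*k))))"
    unfolding Gb_def pairY_simp using I
    by (subst Bochner_Integration.integral_add) (auto intro!: Bochner_Integration.integrable_sum Bochner_Integration.integrable_mult_right simp: Bochner_Integration.integral_sum prob_space)
  also have "\<dots> = Cb p k" by (simp add: E Cb_def)
  finally show "expectation (\<lambda>w. Gb p (pairY Y w) js k) = Cb p k" .
qed

lemma Gb_nonneg: "0 \<le> Gb p y js k"
  unfolding Gb_def by (intro add_nonneg_nonneg sum_nonneg mult_nonneg_nonneg) auto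

lemma mp_int:
  assumes "k \<le> l" "a < p" "b < p"
  shows "integrable M (\<lambda>w. mp p (\<lambda>t. Zm (pairY Y w) (js t)) k a b)"
    and "\<bar>expectation (\<lambda>w. mp p (\<lambda>t. Zm (pairY Y w) (js t)) k a b)\<bar> \<le> Cb p k"
proof -
  have meas: "(\<lambda>w. mp p (\<lambda>t. Zm (pairY Y w) (js t)) k a b) \<in> borel_measurable M"
    by (rule mp_Zm_measurable) (rule coord_meas)
  show int: "integrable M (\<lambda>w. mp p (\<lambda>t. Zm (pairY Y w) (js t)) k a b)"
  proof (rule Bochner_Integration.integrable_bound[OF Gb_int(1)[OF assms(1), of p js] meas])
    show "AE x in M. norm (mp p (\<lambda>t. Zm (pairY Y x) (js t)) k a b) \<le> norm (Gb p (pairY Y x) js k)"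
      using mp_Zm_bound[OF assms(2,3)] Gb_nonneg by (intro AE_I2) (simp add: order_trans)
  qed
  have "\<bar>expectation (\<lambda>w. mp p (\<lambda>t. Zm (pairY Y w) (js t)) k a b)\<bar>
      \<le> expectation (\<lambda>w. \<bar>mp p (\<lambda>t. Zm (pairY Y w) (js t)) k a b\<bar>)"
    by (rule integral_abs_bound)
  also have "\<dots> \<le> expectation (\<lambda>w. Gb p (pairY Y w) js k)"
    using int Gb_int(1)[OF assms(1)] mp_Zm_bound[OF assms(2,3)] by (intro Bochner_Integration.integral_mono) auto
  finally show "\<bar>expectation (\<lambda>w. mp p (\<lambda>t. Zm (pairY Y w) (js t)) k a b)\<bar> \<le> Cb p k"
    using Gb_int(2)[OF assms(1)] by simp
qed

lemma Tr_eq: "Tr p y js k = (\<Sum>a<p. mp p (\<lambda>t. Zm y (js t)) k a a)"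
  by (simp add: Tr_def mat_trace_def)

lemma Tr_int:
  assumes "k \<le> l"
  shows "integrable M (\<lambda>w. Tr p (pairY Y w) js k)"
    and "\<bar>expectation (\<lambda>w. Tr p (pairY Y w) js k)\<bar> \<le> real p * Cb p k"
proof -
  show "integrable M (\<lambda>w. Tr p (pairY Y w) js k)"
    unfolding Tr_eq using mp_int(1)[OF assms] by (intro Bochner_Integration.integrable_sum) auto
  have "expectation (\<lambda>w. Tr p (pairY Y w) js k) = (\<Sum>a<p. expectation (\<lambda>w. mp p (\<lambda>t. Zm (pairY Y w) (js t)) k a a))"
    unfolding Tr_eq using mp_int(1)[OF assms] by (intro Bochner_Integration.integral_sum) auto
  also have "\<bar>\<dots>\<bar> \<le> (\<Sum>a<p. \<bar>expectation (\<lambda>w. mp p (\<lambda>t. Zm (pairY Y w) (js t)) k a a)\<bar>)"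
    by (rule sum_abs)
  also have "\<dots> \<le> (\<Sum>a<p. Cb p k)"
    using mp_int(2)[OF assms] by (intro sum_mono) auto
  finally show "\<bar>expectation (\<lambda>w. Tr p (pairY Y w) js k)\<bar> \<le> real p * Cb p k" by simp
qed

end

lemma mp_dep:
  assumes "\<And>i t. t < k \<Longrightarrow> y (i, js t) = y' (i, js t)"
  shows "mp p (\<lambda>t. Zm y (js t)) k = mp p (\<lambda>t. Zm y' (js t)) k"
  by (rule mp_cong) (auto simp: Zm_def assms intro!: ext)

lemma mp_one: "m < p \<Longrightarrow> mp p Bs (Suc 0) m a = Bs 0 m a"
proof -
  assume m: "m < p"
  have "mp p Bs (Suc 0) m a = (\<Sum>r<p. (if m = r then 1 else 0) * Bs 0 r a)"
    by (simp add: mat_mult_def)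
  also have "\<dots> = (\<Sum>r<p. if r = m then Bs 0 m a else 0)"
    by (rule sum.cong) auto
  also have "\<dots> = Bs 0 m a" using m by simp
  finally show ?thesis .
qed

context setting
begin

lemma ext_meas:
  "(\<lambda>f x. if x \<in> S then f x else (0::real)) \<in> measurable (PiM S (\<lambda>_. borel)) (PiM UNIV (\<lambda>_. borel))"
proof (rule measurable_PiM_single')
  fix x :: 'b
  show "(\<lambda>f. if x \<in> S then f x else 0) \<in> borel_measurable (PiM S (\<lambda>_. borel))"
    by (cases "x \<in> S") auto
qed auto

lemma indep_cols:
  fixes G H :: "(nat \<times> nat \<Rightarrow> real) \<Rightarrow> real"
  assumes Gm: "G \<in> borel_measurable (PiM UNIV (\<lambda>_. borel))"
    and Hm: "H \<in> borel_measurable (PiM UNIV (\<lambda>_. borel))"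
    and Gd: "\<And>y y'. (\<And>i j. j \<noteq> jc \<Longrightarrow> y (i, j) = y' (i, j)) \<Longrightarrow> G y = G y'"
    and Hd: "\<And>y y'. (\<And>i. y (i, jc) = y' (i, jc)) \<Longrightarrow> H y = H y'"
  shows "indep_var borel (\<lambda>w. G (pairY Y w)) borel (\<lambda>w. H (pairY Y w))"
proof -
  define A where "A = {x::nat\<times>nat. snd x \<noteq> jc}"
  define B where "B = {x::nat\<times>nat. snd x = jc}"
  define X where "X = (\<lambda>(i, j). Y i j)"
  define ext where "ext S f = (\<lambda>x. if x \<in> S then f x else (0::real))" for S :: "(nat \<times> nat) set" and f
  have em: "ext S \<in> measurable (PiM S (\<lambda>_. borel)) (PiM UNIV (\<lambda>_. borel))" for S
    unfolding ext_def[abs_def] by (rule ext_meas)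
  have iv: "indep_var (PiM A (\<lambda>_. borel)) (\<lambda>\<omega>. restrict (\<lambda>i. X i \<omega>) A) (PiM B (\<lambda>_. borel)) (\<lambda>\<omega>. restrict (\<lambda>i. X i \<omega>) B)"
    by (rule indep_var_restrict[OF indep[folded X_def]]) (auto simp: A_def B_def)
  have "indep_var borel ((G \<circ> ext A) \<circ> (\<lambda>\<omega>. restrict (\<lambda>i. X i \<omega>) A)) borel ((H \<circ> ext B) \<circ> (\<lambda>\<omega>. restrict (\<lambda>i. X i \<omega>) B))"
    by (rule indep_var_compose[OF iv]) (auto intro: measurable_comp[OF em Gm] measurable_comp[OF em Hm])
  also have "(G \<circ> ext A) \<circ> (\<lambda>\<omega>. restrict (\<lambda>i. X i \<omega>) A) = (\<lambda>w. G (pairY Y w))"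
  proof (rule ext)
    fix w
    show "((G \<circ> ext A) \<circ> (\<lambda>\<omega>. restrict (\<lambda>i. X i \<omega>) A)) w = G (pairY Y w)"
      by (simp, rule Gd) (simp add: ext_def A_def X_def)
  qed
  also have "(H \<circ> ext B) \<circ> (\<lambda>\<omega>. restrict (\<lambda>i. X i \<omega>) B) = (\<lambda>w. H (pairY Y w))"
  proof (rule ext)
    fix w
    show "((H \<circ> ext B) \<circ> (\<lambda>\<omega>. restrict (\<lambda>i. X i \<omega>) B)) w = H (pairY Y w)"
      by (simp, rule Hd) (simp add: ext_def B_def X_def)
  qed
  finally show ?thesis .
qed

lemma mp_meas_Pi: "(\<lambda>y. mp p (\<lambda>t. Zm y (js t)) k a b) \<in> borel_measurable (PiM UNIV (\<lambda>_. borel))"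
  using mp_Zm_measurable[where y = "\<lambda>\<omega>. \<omega>" and N = "PiM UNIV (\<lambda>_. borel)"] by simp

lemma Y_int: assumes "1 \<le> l" shows "integrable M (Y i j)"
proof (rule Bochner_Integration.integrable_bound)
  show "integrable M (\<lambda>w. (1 + \<bar>Y i j w\<bar>) ^ 1)" using mom_int(1)[of 1 i j] assms by simp
  show "Y i j \<in> borel_measurable M" by (rule rv)
  show "AE x in M. norm (Y i j x) \<le> norm ((1 + \<bar>Y i j x\<bar>) ^ 1)" by (intro AE_I2) simp
qed

lemma Y_mean: "expectation (Y i j) = 0"
  using ident_integral(1)[of "\<lambda>x. x" i j] mean by simp

lemma Y_sq: "integrable M (\<lambda>w. (Y i j w)^2)" "expectation (\<lambda>w. (Y i j w)^2) = 1"
  using ident_integral[of "\<lambda>x. x^2" i j] sq_int var by auto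

lemma Y_prod2:
  assumes "1 \<le> l" "a \<noteq> b"
  shows "integrable M (\<lambda>w. Y a j w * Y b j w)" "expectation (\<lambda>w. Y a j w * Y b j w) = 0"
proof -
  have ind: "indep_vars (\<lambda>_. borel) (\<lambda>(i, j). Y i j) {(a, j), (b, j)}"
    by (rule indep_vars_subset[OF indep]) auto
  have int: "\<And>x. x \<in> {(a, j), (b, j)} \<Longrightarrow> integrable M ((\<lambda>(i, j). Y i j) x)"
    using Y_int[OF assms(1)] by auto
  have "integrable M (\<lambda>w. \<Prod>x\<in>{(a, j), (b, j)}. (\<lambda>(i, j). Y i j) x w)"
    by (rule indep_vars_integrable[OF _ ind int]) simp
  then show "integrable M (\<lambda>w. Y a j w * Y b j w)" using assms by simp
  have "expectation (\<lambda>w. \<Prod>x\<in>{(a, j), (b, j)}. (\<lambda>(i, j). Y i j) x w) = (\<Prod>x\<in>{(a, j), (b, j)}. expectation ((\<lambda>(i, j). Y i j) x))"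
    by (rule indep_vars_lebesgue_integral[OF _ ind int]) simp
  then show "expectation (\<lambda>w. Y a j w * Y b j w) = 0" using assms by (simp add: Y_mean)
qed

lemma Zm_mean:
  assumes "1 \<le> l"
  shows "expectation (\<lambda>w. Zm (pairY Y w) j a b) = 0"
proof (cases "a = b")
  case True
  have "expectation (\<lambda>w. Zm (pairY Y w) j a b) = expectation (\<lambda>w. (Y a j w)^2 - 1)"
    using True by (simp add: Zm_def power2_eq_square)
  also have "\<dots> = 0" using Y_sq[of a j] by (subst Bochner_Integration.integral_diff) (auto simp: prob_space)
  finally show ?thesis .
next
  case False
  have "expectation (\<lambda>w. Zm (pairY Y w) j a b) = expectation (\<lambda>w. Y a j w * Y b j w)"
    using False by (simp add: Zm_def)
  also have "\<dots> = 0" by (rule Y_prod2[OF assms False])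
  finally show ?thesis .
qed

lemma Tr_last_zero:
  assumes "Suc k \<le> l" "\<And>t. t < k \<Longrightarrow> js t \<noteq> js k"
  shows "expectation (\<lambda>w. Tr p (pairY Y w) js (Suc k)) = 0"
proof -
  have dec: "Tr p y js (Suc k) = (\<Sum>a<p. \<Sum>m<p. mp p (\<lambda>t. Zm y (js t)) k a m * Zm y (js k) m a)" for y
    by (simp add: Tr_def mat_trace_def mat_mult_def)
  have each: "integrable M (\<lambda>w. mp p (\<lambda>t. Zm (pairY Y w) (js t)) k a m * Zm (pairY Y w) (js k) m a) \<and>
      expectation (\<lambda>w. mp p (\<lambda>t. Zm (pairY Y w) (js t)) k a m * Zm (pairY Y w) (js k) m a) = 0"
    if am: "a < p" "m < p" for a m
  proof -
    have iv: "indep_var borel (\<lambda>w. mp p (\<lambda>t. Zm (pairY Y w) (js t)) k a m) borel (\<lambda>w. Zm (pairY Y w) (js k) m a)"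
    proof (rule indep_cols[where G = "\<lambda>y. mp p (\<lambda>t. Zm y (js t)) k a m" and H = "\<lambda>y. Zm y (js k) m a" and jc = "js k"])
      show "(\<lambda>y. mp p (\<lambda>t. Zm y (js t)) k a m) \<in> borel_measurable (PiM UNIV (\<lambda>_. borel))"
        by (rule mp_meas_Pi)
      show "(\<lambda>y. Zm y (js k) m a) \<in> borel_measurable (PiM UNIV (\<lambda>_. borel))"
        unfolding Zm_def by measurable
      fix y y' :: "nat \<times> nat \<Rightarrow> real"
      assume "\<And>i j. j \<noteq> js k \<Longrightarrow> y (i, j) = y' (i, j)"
      then show "mp p (\<lambda>t. Zm y (js t)) k a m = mp p (\<lambda>t. Zm y' (js t)) k a m"
        using assms(2) by (subst mp_dep[where y' = y']) auto
    next
      fix y y' :: "nat \<times> nat \<Rightarrow> real"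
      assume "\<And>i. y (i, js k) = y' (i, js k)"
      then show "Zm y (js k) m a = Zm y' (js k) m a" by (simp add: Zm_def)
    qed
    have i1: "integrable M (\<lambda>w. mp p (\<lambda>t. Zm (pairY Y w) (js t)) k a m)"
      using mp_int(1)[of k a p m js] assms am by simp
    have i2: "integrable M (\<lambda>w. Zm (pairY Y w) (js k) m a)"
    proof -
      have "(\<lambda>w. mp p (\<lambda>t. Zm (pairY Y w) ((\<lambda>_. js k) t)) (Suc 0) m a) = (\<lambda>w. Zm (pairY Y w) (js k) m a)"
        by (rule ext, rule mp_one[OF am(2)])
      moreover have "integrable M (\<lambda>w. mp p (\<lambda>t. Zm (pairY Y w) ((\<lambda>_. js k) t)) (Suc 0) m a)"
        by (rule mp_int(1)) (use assms am in auto)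
      ultimately show ?thesis by simp
    qed
    show ?thesis
      using indep_var_lebesgue_integral[OF iv i1 i2] indep_var_integrable[OF iv i1 i2] Zm_mean assms
      by simp
  qed
  have inner: "expectation (\<lambda>w. \<Sum>m<p. mp p (\<lambda>t. Zm (pairY Y w) (js t)) k a m * Zm (pairY Y w) (js k) m a) = 0
     \<and> integrable M (\<lambda>w. \<Sum>m<p. mp p (\<lambda>t. Zm (pairY Y w) (js t)) k a m * Zm (pairY Y w) (js k) m a)"
    if "a < p" for a
  proof
    show "integrable M (\<lambda>w. \<Sum>m<p. mp p (\<lambda>t. Zm (pairY Y w) (js t)) k a m * Zm (pairY Y w) (js k) m a)"
      using each[OF that] by (intro Bochner_Integration.integrable_sum) auto
    have "expectation (\<lambda>w. \<Sum>m<p. mp p (\<lambda>t. Zm (pairY Y w) (js t)) k a m * Zm (pairY Y w) (js k) m a)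
      = (\<Sum>m<p. expectation (\<lambda>w. mp p (\<lambda>t. Zm (pairY Y w) (js t)) k a m * Zm (pairY Y w) (js k) m a))"
      using each[OF that] by (intro Bochner_Integration.integral_sum) auto
    also have "\<dots> = 0" using each[OF that] by simp
    finally show "expectation (\<lambda>w. \<Sum>m<p. mp p (\<lambda>t. Zm (pairY Y w) (js t)) k a m * Zm (pairY Y w) (js k) m a) = 0" .
  qed
  have "expectation (\<lambda>w. Tr p (pairY Y w) js (Suc k)) =
      (\<Sum>a<p. expectation (\<lambda>w. \<Sum>m<p. mp p (\<lambda>t. Zm (pairY Y w) (js t)) k a m * Zm (pairY Y w) (js k) m a))"
    unfolding dec using inner by (intro Bochner_Integration.integral_sum) auto
  also have "\<dots> = 0" using inner by simp
  finally show ?thesis .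
qed

lemma Tr_unique_zero:
  assumes "t0 < k" "k \<le> l" "\<And>t. t < k \<Longrightarrow> t \<noteq> t0 \<Longrightarrow> js t \<noteq> js t0"
  shows "expectation (\<lambda>w. Tr p (pairY Y w) js k) = 0"
proof -
  define r where "r = k - Suc t0"
  define js' where "js' s = (if s < r then js (Suc t0 + s) else js (s - r))" for s
  have rot: "Tr p y js k = Tr p y js' k" for y
  proof -
    have "Tr p y js k = mat_trace p (mp p (\<lambda>s. if s < r then Zm y (js (Suc t0 + s)) else Zm y (js (s - r))) k)"
      unfolding Tr_def r_def by (rule trace_rotate[OF assms(1)])
    also have "(\<lambda>s. if s < r then Zm y (js (Suc t0 + s)) else Zm y (js (s - r))) = (\<lambda>s. Zm y (js' s))"
      by (rule ext) (simp add: js'_def)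
    finally show ?thesis by (simp add: Tr_def)
  qed
  obtain k' where k': "k = Suc k'" using assms(1) by (cases k) auto
  have r1: "\<not> k' < r" "k' - r = t0" using assms(1) by (simp_all add: r_def k')
  have last: "js' k' = js t0"
    using r1 by (simp add: js'_def)
  have uniq: "js' t \<noteq> js' k'" if "t < k'" for t
  proof (cases "t < r")
    case True
    then show ?thesis unfolding last using assms that by (simp add: js'_def r_def k')
  next
    case False
    then show ?thesis unfolding last using assms that by (simp add: js'_def r_def k')
  qed
  have "expectation (\<lambda>w. Tr p (pairY Y w) js k) = expectation (\<lambda>w. Tr p (pairY Y w) js' (Suc k'))"
  proof -
    have "(\<lambda>w. Tr p (pairY Y w) js k) = (\<lambda>w. Tr p (pairY Y w) js' k)" using rot by simp
    then show ?thesis by (simp add: k')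
  qed
  also have "\<dots> = 0"
    by (rule Tr_last_zero) (use assms k' uniq in auto)
  finally show ?thesis .
qed

end

lemma count_bad:
  assumes "3 \<le> k"
  shows "card {js \<in> PiE {..<k} (\<lambda>_. {..<n::nat}). \<forall>t<k. \<exists>t'<k. t' \<noteq> t \<and> js t' = js t} \<le> k ^ 4 * n ^ (k - 2)"
proof -
  define Q where "Q = {(a, b, a', b'). a < k \<and> b < k \<and> a' < k \<and> b' < k \<and> a \<noteq> b \<and> a' \<noteq> a \<and> a' \<noteq> b \<and> b' \<noteq> a \<and> b' \<noteq> b}"
  define S where "S a b a' b' = {js \<in> PiE {..<k} (\<lambda>_. {..<n}). js a = js a' \<and> js b = js b'}" for a b a' b' :: nat
  define Bad where "Bad = {js \<in> PiE {..<k} (\<lambda>_. {..<n::nat}). \<forall>t<k. \<exists>t'<k. t' \<noteq> t \<and> js t' = js t}"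
  have QS: "Q \<subseteq> {..<k} \<times> {..<k} \<times> {..<k} \<times> {..<k}" by (auto simp: Q_def)
  have finQ: "finite Q" by (rule finite_subset[OF QS]) auto
  have cardQ: "card Q \<le> k ^ 4"
  proof -
    have "card Q \<le> card ({..<k} \<times> {..<k} \<times> {..<k} \<times> {..<k})"
      by (rule card_mono[OF _ QS]) auto
    also have "\<dots> = k ^ 4" by (simp add: card_cartesian_product power4_eq_xxxx)
    finally show ?thesis .
  qed
  have cardS: "card (S a b a' b') \<le> n ^ (k - 2)" if q: "(a, b, a', b') \<in> Q" for a b a' b'
  proof -
    let ?R = "{..<k} - {a, b}"
    have q': "a < k" "b < k" "a' < k" "b' < k" "a \<noteq> b" "a' \<noteq> a" "a' \<noteq> b" "b' \<noteq> a" "b' \<noteq> b"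
      using q by (auto simp: Q_def)
    have inj: "inj_on (\<lambda>js. restrict js ?R) (S a b a' b')"
    proof (rule inj_onI)
      fix f g assume f: "f \<in> S a b a' b'" and g: "g \<in> S a b a' b'" and eq: "restrict f ?R = restrict g ?R"
      have R: "f x = g x" if "x \<in> ?R" for x
        using fun_cong[OF eq, of x] that by simp
      show "f = g"
      proof (rule ext)
        fix x
        show "f x = g x"
        proof (cases "x < k")
          case False
          then show ?thesis using f g by (auto simp: S_def PiE_def extensional_def)
        next
          case True
          show ?thesis
          proof (cases "x = a")
            case True
            then show ?thesis using f g R[of a'] q' by (auto simp: S_def)
          next
            case False
            show ?thesis
            proof (cases "x = b")
              case True
              then show ?thesis using f g R[of b'] q' by (auto simp: S_def)
            next
              case False
              then show ?thesis using R[of x] \<open>x < k\<close> \<open>x \<noteq> a\<close> by auto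
            qed
          qed
        qed
      qed
    qed
    have "card (S a b a' b') \<le> card (PiE ?R (\<lambda>_. {..<n}))"
    proof (rule card_inj_on_le[OF inj])
      show "(\<lambda>js. restrict js ?R) ` S a b a' b' \<subseteq> PiE ?R (\<lambda>_. {..<n})"
      proof
        fix x assume "x \<in> (\<lambda>js. restrict js ?R) ` S a b a' b'"
        then obtain js where js: "js \<in> S a b a' b'" "x = restrict js ?R" by blast
        then have "js \<in> PiE {..<k} (\<lambda>_. {..<n})" by (simp add: S_def)
        then show "x \<in> PiE ?R (\<lambda>_. {..<n})" unfolding js(2) by (auto simp: PiE_iff)
      qed
      show "finite (PiE ?R (\<lambda>_. {..<n}))" by (rule finite_PiE) auto
    qed
    also have "\<dots> = n ^ card ?R" by (simp add: card_PiE)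
    also have "card ?R = k - 2" using q' by (subst card_Diff_subset) auto
    finally show ?thesis .
  qed
  have sub: "Bad \<subseteq> (\<Union>q\<in>Q. case q of (a, b, a', b') \<Rightarrow> S a b a' b')"
  proof
    fix js assume js: "js \<in> Bad"
    then have P: "js \<in> PiE {..<k} (\<lambda>_. {..<n})" and D: "\<And>t. t < k \<Longrightarrow> \<exists>t'<k. t' \<noteq> t \<and> js t' = js t"
      by (auto simp: Bad_def)
    obtain s where s: "s < k" "s \<noteq> 0" "js s = js 0" using D[of 0] assms by auto
    show "js \<in> (\<Union>q\<in>Q. case q of (a, b, a', b') \<Rightarrow> S a b a' b')"
    proof (cases "\<exists>u<k. u \<noteq> 0 \<and> u \<noteq> s \<and> js u = js 0")
      case True
      then obtain u where u: "u < k" "u \<noteq> 0" "u \<noteq> s" "js u = js 0" by auto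
      have q: "(s, u, 0, 0) \<in> Q" using s u assms by (auto simp: Q_def)
      have m: "js \<in> S s u 0 0" using P s u by (simp add: S_def)
      show ?thesis by (rule UN_I[OF q]) (simp add: m)
    next
      case False
      define t where "t = (if s = 1 then 2 else (1::nat))"
      have t: "t < k" "t \<noteq> 0" "t \<noteq> s" using assms by (auto simp: t_def)
      have tne: "js t \<noteq> js 0" using False t by auto
      obtain u where u: "u < k" "u \<noteq> t" "js u = js t" using D[OF t(1)] by auto
      have u0: "u \<noteq> 0" "u \<noteq> s"
      proof -
        show "u \<noteq> 0"
        proof
          assume "u = 0"
          with u(3) have "js t = js 0" by simp
          with tne show False by simp
        qed
        show "u \<noteq> s"
        proof
          assume "u = s"
          with u(3) s(3) have "js t = js 0" by simp
          with tne show False by simp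
        qed
      qed
      have q: "(s, u, 0, t) \<in> Q" using s u u0 t by (auto simp: Q_def)
      have m: "js \<in> S s u 0 t" using P s u by (simp add: S_def)
      show ?thesis by (rule UN_I[OF q]) (simp add: m)
    qed
  qed
  have finS: "finite (S a b a' b')" for a b a' b'
    by (rule finite_subset[of _ "PiE {..<k} (\<lambda>_. {..<n})"]) (auto simp: S_def intro!: finite_PiE)
  have finU: "finite (\<Union>q\<in>Q. case q of (a, b, a', b') \<Rightarrow> S a b a' b')"
    by (intro finite_UN_I finQ) (simp add: finS split: prod.split)
  have "card Bad \<le> card (\<Union>q\<in>Q. case q of (a, b, a', b') \<Rightarrow> S a b a' b')"
    by (rule card_mono[OF finU sub])
  also have "\<dots> \<le> (\<Sum>q\<in>Q. card (case q of (a, b, a', b') \<Rightarrow> S a b a' b'))"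
    by (rule card_UN_le[OF finQ])
  also have "\<dots> \<le> (\<Sum>q\<in>Q. n ^ (k - 2))"
    by (rule sum_mono) (use cardS in auto)
  also have "\<dots> = card Q * n ^ (k - 2)" by simp
  also have "\<dots> \<le> k ^ 4 * n ^ (k - 2)" using cardQ by simp
  finally show ?thesis by (simp add: Bad_def)
qed

context setting
begin

lemma Y4:
  assumes "2 \<le> l"
  shows "integrable M (\<lambda>w. (Y i j w)^4)" "expectation (\<lambda>w. (Y i j w)^4) = expectation (\<lambda>w. (Y 0 0 w)^4)"
proof -
  have "integrable M (\<lambda>w. (Y i j w)^4)"
  proof (rule Bochner_Integration.integrable_bound)
    show "integrable M (\<lambda>w. (1 + \<bar>Y i j w\<bar>) ^ 4)" using mom_int(1)[of 4 i j] assms by simp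
    show "(\<lambda>w. (Y i j w)^4) \<in> borel_measurable M" using rv by measurable
    show "AE x in M. norm ((Y i j x)^4) \<le> norm ((1 + \<bar>Y i j x\<bar>) ^ 4)"
    proof (rule AE_I2)
      fix x
      have "\<bar>Y i j x\<bar> ^ 4 \<le> (1 + \<bar>Y i j x\<bar>) ^ 4" by (intro power_mono) auto
      then show "norm ((Y i j x)^4) \<le> norm ((1 + \<bar>Y i j x\<bar>) ^ 4)" by (simp add: power_abs)
    qed
  qed
  then show "integrable M (\<lambda>w. (Y i j w)^4)" .
  show "expectation (\<lambda>w. (Y i j w)^4) = expectation (\<lambda>w. (Y 0 0 w)^4)"
    using ident_integral(1)[of "\<lambda>x. x^4" i j] by simp
qed

lemma Zm_sq:
  assumes "2 \<le> l"
  shows "integrable M (\<lambda>w. (Zm (pairY Y w) j a m)^2)"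
    "expectation (\<lambda>w. (Zm (pairY Y w) j a m)^2) = (if a = m then expectation (\<lambda>w. (Y 0 0 w)^4) - 1 else 1)"
proof -
  have "integrable M (\<lambda>w. (Zm (pairY Y w) j a m)^2) \<and>
    expectation (\<lambda>w. (Zm (pairY Y w) j a m)^2) = (if a = m then expectation (\<lambda>w. (Y 0 0 w)^4) - 1 else 1)"
  proof (cases "a = m")
    case True
    have eq: "(\<lambda>w. (Zm (pairY Y w) j a m)^2) = (\<lambda>w. (Y a j w)^4 - 2 * (Y a j w)^2 + 1)"
      using True by (auto simp: Zm_def power2_eq_square power4_eq_xxxx algebra_simps intro!: ext)
    have i4: "integrable M (\<lambda>w. (Y a j w)^4)" using Y4[OF assms] by simp
    have i2: "integrable M (\<lambda>w. 2 * (Y a j w)^2)" using Y_sq by simp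
    have "expectation (\<lambda>w. (Y a j w)^4 - 2 * (Y a j w)^2 + 1) = expectation (\<lambda>w. (Y 0 0 w)^4) - 2 + 1"
      using i4 i2 Y4[OF assms, of a j] Y_sq[of a j]
      by (simp add: Bochner_Integration.integral_add Bochner_Integration.integral_diff
          Bochner_Integration.integrable_diff prob_space)
    then show ?thesis using True i4 i2 unfolding eq
      by (auto intro!: Bochner_Integration.integrable_add Bochner_Integration.integrable_diff)
  next
    case False
    have eq: "(\<lambda>w. (Zm (pairY Y w) j a m)^2) = (\<lambda>w. \<Prod>x\<in>{(a, j), (m, j)}. (\<lambda>x w. ((\<lambda>(i, j). Y i j) x w)^2) x w)"
      using False by (auto simp: Zm_def power_mult_distrib intro!: ext)
    have ind0: "indep_vars (\<lambda>_. borel) (\<lambda>x w. ((\<lambda>(i, j). Y i j) x w)^2) UNIV"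
      by (rule indep_vars_compose2[OF indep, where Y = "\<lambda>_ x. x^2"]) auto
    have ind: "indep_vars (\<lambda>_. borel) (\<lambda>x w. ((\<lambda>(i, j). Y i j) x w)^2) {(a, j), (m, j)}"
      by (rule indep_vars_subset[OF ind0]) auto
    have int: "\<And>x. x \<in> {(a, j), (m, j)} \<Longrightarrow> integrable M ((\<lambda>x w. ((\<lambda>(i, j). Y i j) x w)^2) x)"
      using Y_sq(1) by auto
    show ?thesis
      unfolding eq using indep_vars_lebesgue_integral[OF _ ind int] indep_vars_integrable[OF _ ind int] False
      by (simp add: Y_sq)
  qed
  then show "integrable M (\<lambda>w. (Zm (pairY Y w) j a m)^2)"
    "expectation (\<lambda>w. (Zm (pairY Y w) j a m)^2) = (if a = m then expectation (\<lambda>w. (Y 0 0 w)^4) - 1 else 1)"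
    by auto
qed

lemma Tr_two:
  assumes "2 \<le> l"
  shows "expectation (\<lambda>w. Tr p (pairY Y w) js 2) =
    (if js 0 = js 1 then real p * (expectation (\<lambda>w. (Y 0 0 w)^4) + real p - 2) else 0)"
proof (cases "js 0 = js 1")
  case False
  have "expectation (\<lambda>w. Tr p (pairY Y w) js (Suc 1)) = 0"
    by (rule Tr_last_zero) (use assms False in auto)
  then show ?thesis using False by (simp add: numeral_2_eq_2)
next
  case True
  define j where "j = js 0"
  have dec: "Tr p y js 2 = (\<Sum>a<p. \<Sum>m<p. (Zm y j a m)^2)" for y
  proof -
    have "Tr p y js 2 = (\<Sum>a<p. \<Sum>m<p. mp p (\<lambda>t. Zm y (js t)) (Suc 0) a m * Zm y (js 1) m a)"
      by (simp add: Tr_def mat_trace_def mat_mult_def numeral_2_eq_2 del: mp.simps(2)) (simp add: mat_mult_def)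
    also have "\<dots> = (\<Sum>a<p. \<Sum>m<p. (Zm y j a m)^2)"
    proof (intro sum.cong refl)
      fix a m assume "a \<in> {..<p}" "m \<in> {..<p}"
      then have "mp p (\<lambda>t. Zm y (js t)) (Suc 0) a m = Zm y (js 0) a m" by (intro mp_one) simp
      then show "mp p (\<lambda>t. Zm y (js t)) (Suc 0) a m * Zm y (js 1) m a = (Zm y j a m)^2"
        using True by (simp add: j_def Zm_def power2_eq_square mult.commute)
    qed
    finally show ?thesis .
  qed
  have "expectation (\<lambda>w. Tr p (pairY Y w) js 2) = (\<Sum>a<p. \<Sum>m<p. expectation (\<lambda>w. (Zm (pairY Y w) j a m)^2))"
    unfolding dec using Zm_sq[OF assms]
    by (simp add: Bochner_Integration.integral_sum Bochner_Integration.integrable_sum)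
  also have "\<dots> = (\<Sum>a<p. \<Sum>m<p. (if a = m then expectation (\<lambda>w. (Y 0 0 w)^4) - 1 else 1))"
    using Zm_sq[OF assms] by simp
  also have "\<dots> = (\<Sum>a<p. real p + (expectation (\<lambda>w. (Y 0 0 w)^4) - 2))"
  proof (rule sum.cong[OF refl])
    fix a assume a: "a \<in> {..<p}"
    have "(\<Sum>m<p. (if a = m then expectation (\<lambda>w. (Y 0 0 w)^4) - 1 else 1)) = (\<Sum>m<p. 1 + (if m = a then expectation (\<lambda>w. (Y 0 0 w)^4) - 2 else 0))"
      by (rule sum.cong) auto
    also have "\<dots> = real p + (expectation (\<lambda>w. (Y 0 0 w)^4) - 2)" using a by (simp add: sum.distrib)
    finally show "(\<Sum>m<p. (if a = m then expectation (\<lambda>w. (Y 0 0 w)^4) - 1 else 1)) = real p + (expectation (\<lambda>w. (Y 0 0 w)^4) - 2)" .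
  qed
  also have "\<dots> = real p * (expectation (\<lambda>w. (Y 0 0 w)^4) + real p - 2)" by (simp add: algebra_simps)
  finally show ?thesis using True by simp
qed

lemma Cb_nonneg: "0 \<le> Cb p k"
proof -
  have "0 \<le> mu m" for m unfolding mu_def by (rule Bochner_Integration.integral_nonneg) auto
  then show ?thesis unfolding Cb_def by (intro add_nonneg_nonneg mult_nonneg_nonneg) auto
qed

definition e :: "nat \<Rightarrow> nat \<Rightarrow> nat \<Rightarrow> real" where
  "e p k n = (\<Sum>js\<in>PiE {..<k} (\<lambda>_. {..<n}). expectation (\<lambda>w. Tr p (pairY Y w) js k))"

lemma e_high:
  assumes "3 \<le> k" "k \<le> l"
  shows "\<bar>e p k n\<bar> \<le> real (k ^ 4 * n ^ (k - 2)) * (real p * Cb p k)"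
proof -
  define Bad where "Bad = {js \<in> PiE {..<k} (\<lambda>_. {..<n::nat}). \<forall>t<k. \<exists>t'<k. t' \<noteq> t \<and> js t' = js t}"
  have fin: "finite (PiE {..<k} (\<lambda>_. {..<n}))" by (rule finite_PiE) auto
  have "e p k n = (\<Sum>js\<in>Bad. expectation (\<lambda>w. Tr p (pairY Y w) js k))"
    unfolding e_def
  proof (rule sum.mono_neutral_right[OF fin])
    show "Bad \<subseteq> PiE {..<k} (\<lambda>_. {..<n})" by (auto simp: Bad_def)
    show "\<forall>js\<in>PiE {..<k} (\<lambda>_. {..<n}) - Bad. expectation (\<lambda>w. Tr p (pairY Y w) js k) = 0"
    proof
      fix js assume "js \<in> PiE {..<k} (\<lambda>_. {..<n}) - Bad"
      then obtain t0 where "t0 < k" "\<And>t'. t' < k \<Longrightarrow> t' \<noteq> t0 \<Longrightarrow> js t' \<noteq> js t0"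
        by (auto simp: Bad_def)
      then show "expectation (\<lambda>w. Tr p (pairY Y w) js k) = 0"
        by (intro Tr_unique_zero[of t0 k]) (use assms in auto)
    qed
  qed
  also have "\<bar>\<dots>\<bar> \<le> (\<Sum>js\<in>Bad. \<bar>expectation (\<lambda>w. Tr p (pairY Y w) js k)\<bar>)" by (rule sum_abs)
  also have "\<dots> \<le> (\<Sum>js\<in>Bad. real p * Cb p k)" by (intro sum_mono Tr_int(2) assms)
  also have "\<dots> = real (card Bad) * (real p * Cb p k)" by simp
  also have "\<dots> \<le> real (k ^ 4 * n ^ (k - 2)) * (real p * Cb p k)"
  proof -
    have cb: "card Bad \<le> k ^ 4 * n ^ (k - 2)" using count_bad[OF assms(1), of n] by (simp add: Bad_def)
    then have "real (card Bad) \<le> real (k ^ 4 * n ^ (k - 2))" by (rule of_nat_mono)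
    then show ?thesis by (rule mult_right_mono) (intro mult_nonneg_nonneg Cb_nonneg of_nat_0_le_iff)
  qed
  finally show ?thesis .
qed

lemma e_zero: "e p 0 n = real p"
  by (simp add: e_def Tr_def mat_trace_def prob_space)

lemma e_one: "1 \<le> l \<Longrightarrow> e p 1 n = 0"
  unfolding e_def by (intro sum.neutral ballI Tr_unique_zero[of 0]) auto

lemma e_two: "2 \<le> l \<Longrightarrow> e p 2 n = real n * (real p * (expectation (\<lambda>w. (Y 0 0 w)^4) + real p - 2))"
proof -
  assume l: "2 \<le> l"
  define c where "c = real p * (expectation (\<lambda>w. (Y 0 0 w)^4) + real p - 2)"
  have "e p 2 n = (\<Sum>js\<in>PiE {..<Suc (Suc 0)} (\<lambda>_. {..<n}). (if js 0 = js 1 then c else 0))"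
    unfolding e_def c_def using Tr_two[OF l] by (simp add: numeral_2_eq_2)
  also have "\<dots> = (\<Sum>j'<n. \<Sum>j<n. (if j' = j then c else 0))"
    by (simp add: sum_PiE_Suc)
  also have "\<dots> = real n * c" by simp
  finally show ?thesis by (simp add: c_def)
qed

end

lemma choose2_real: "real (l choose 2) * 2 = real l * (real l - 1)"
proof (induction l)
  case 0 then show ?case by simp
next
  case (Suc l)
  have "Suc l choose 2 = l + (l choose 2)"
    using binomial_Suc_Suc[of l 1] by (simp add: numeral_2_eq_2)
  then have "real (Suc l choose 2) * 2 = 2 * real l + real (l choose 2) * 2" by simp
  also have "\<dots> = real (Suc l) * (real (Suc l) - 1)" using Suc.IH by (simp add: algebra_simps)
  finally show ?case .
qed

context setting
begin

lemma sample_cov_decomp: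
  assumes "n \<ge> 1"
  shows "sample_cov Y n w = (\<lambda>a b. (if a = b then 1 else 0) + (1 / real n) * (\<Sum>j<n. Zm (pairY Y w) j a b))"
proof (intro ext)
  fix a b
  have "(\<Sum>j<n. Y a j w * Y b j w) = (\<Sum>j<n. Zm (pairY Y w) j a b) + real n * (if a = b then 1 else 0)"
    by (simp add: Zm_def sum.distrib sum_subtractf)
  then show "sample_cov Y n w a b = (if a = b then 1 else 0) + (1 / real n) * (\<Sum>j<n. Zm (pairY Y w) j a b)"
    using assms by (simp add: sample_cov_def field_simps)
qed

lemma trace_expand:
  assumes "n \<ge> 1"
  shows "mat_trace p (mat_pow p (sample_cov Y n w) l) =
    (\<Sum>k\<le>l. real (l choose k) * ((1 / real n) ^ k * (\<Sum>js\<in>PiE {..<k} (\<lambda>_. {..<n}). Tr p (pairY Y w) js k)))"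
proof -
  define D where "D = (\<lambda>a b. (1 / real n) * (\<Sum>j<n. Zm (pairY Y w) j a b))"
  have "mat_trace p (mat_pow p (sample_cov Y n w) l) = mat_trace p (\<lambda>a b. \<Sum>k\<le>l. real (l choose k) * mat_pow p D k a b)"
  proof -
    have "sample_cov Y n w = (\<lambda>a b. (if a = b then 1 else 0) + D a b)"
      by (simp add: sample_cov_decomp[OF assms] D_def)
    then show ?thesis by (simp only:) (rule mat_trace_eqp[OF mat_pow_binomial])
  qed
  also have "\<dots> = (\<Sum>k\<le>l. mat_trace p (\<lambda>a b. real (l choose k) * mat_pow p D k a b))"
    by (rule mat_trace_sum)
  also have "\<dots> = (\<Sum>k\<le>l. real (l choose k) * ((1 / real n) ^ k * (\<Sum>js\<in>PiE {..<k} (\<lambda>_. {..<n}). Tr p (pairY Y w) js k)))"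
  proof (rule sum.cong[OF refl])
    fix k
    have "mat_pow p D k = (\<lambda>a b. (1 / real n) ^ k * (\<Sum>js\<in>PiE {..<k} (\<lambda>_. {..<n}). mp p (\<lambda>t. Zm (pairY Y w) (js t)) k a b))"
      unfolding D_def by (rule mat_pow_expand)
    then show "mat_trace p (\<lambda>a b. real (l choose k) * mat_pow p D k a b) =
        real (l choose k) * ((1 / real n) ^ k * (\<Sum>js\<in>PiE {..<k} (\<lambda>_. {..<n}). Tr p (pairY Y w) js k))"
      unfolding Tr_def mat_trace_def by (simp add: sum_distrib_left) (rule sum.swap)
  qed
  finally show ?thesis .
qed

lemma expect_expand:
  assumes "n \<ge> 1"
  shows "expectation (\<lambda>w. mat_trace p (mat_pow p (sample_cov Y n w) l)) =
    (\<Sum>k\<le>l. real (l choose k) * ((1 / real n) ^ k * e p k n))"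
proof -
  have int: "integrable M (\<lambda>w. Tr p (pairY Y w) js k)" if "k \<le> l" for js k
    by (rule Tr_int(1)[OF that])
  have "expectation (\<lambda>w. mat_trace p (mat_pow p (sample_cov Y n w) l)) =
    expectation (\<lambda>w. \<Sum>k\<le>l. real (l choose k) * ((1 / real n) ^ k * (\<Sum>js\<in>PiE {..<k} (\<lambda>_. {..<n}). Tr p (pairY Y w) js k)))"
    by (simp add: trace_expand[OF assms])
  also have "\<dots> = (\<Sum>k\<le>l. expectation (\<lambda>w. real (l choose k) * ((1 / real n) ^ k * (\<Sum>js\<in>PiE {..<k} (\<lambda>_. {..<n}). Tr p (pairY Y w) js k))))"
    using int by (intro Bochner_Integration.integral_sum) (auto intro!: Bochner_Integration.integrable_sum)
  also have "\<dots> = (\<Sum>k\<le>l. real (l choose k) * ((1 / real n) ^ k * e p k n))"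
  proof (rule sum.cong[OF refl])
    fix k assume "k \<in> {..l}"
    then have k: "k \<le> l" by simp
    show "expectation (\<lambda>w. real (l choose k) * ((1 / real n) ^ k * (\<Sum>js\<in>PiE {..<k} (\<lambda>_. {..<n}). Tr p (pairY Y w) js k))) =
        real (l choose k) * ((1 / real n) ^ k * e p k n)"
      unfolding e_def using int[OF k]
      by (simp add: Bochner_Integration.integral_sum Bochner_Integration.integrable_sum)
  qed
  finally show ?thesis .
qed

lemma final:
  assumes alpha: "\<alpha> = expectation (\<lambda>w. (Y 0 0 w)^4)"
  shows "(\<lambda>n. expectation (\<lambda>w. mat_trace p (mat_pow p (sample_cov Y n w) l))
            - (real p + real p * real l / (2 * real n)
                 * (\<alpha> * (real l - 1) + real l * real p - 2 * real l - real p + 2)))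
         \<in> O(\<lambda>n. 1 / (real n)^2)"
proof -
  define c where "c = real p * (\<alpha> + real p - 2)"
  define K where "K = (\<Sum>k\<le>l. real (l choose k) * (real (k ^ 4) * (real p * Cb p k)))"
  define g where "g k n = (if k = 0 then real p else if k = 2 then real n * c else 0)" for k n :: nat
  have key: "\<bar>expectation (\<lambda>w. mat_trace p (mat_pow p (sample_cov Y n w) l))
            - (real p + real p * real l / (2 * real n)
                 * (\<alpha> * (real l - 1) + real l * real p - 2 * real l - real p + 2))\<bar> \<le> K * (1 / (real n)^2)"
    if n: "n \<ge> 1" for n
  proof -
    have n0: "real n > 0" using n by simp
    have gsum: "(\<Sum>k\<le>l. real (l choose k) * ((1 / real n) ^ k * g k n)) =
        real p + real p * real l / (2 * real n) * (\<alpha> * (real l - 1) + real l * real p - 2 * real l - real p + 2)"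
    proof -
      have "(\<Sum>k\<le>l. real (l choose k) * ((1 / real n) ^ k * g k n)) =
          (\<Sum>k\<le>l. (if k = 0 then real p else 0)) + (\<Sum>k\<le>l. (if k = 2 then real (l choose 2) * ((1 / real n) ^ 2 * (real n * c)) else 0))"
        by (subst sum.distrib[symmetric]) (rule sum.cong, auto simp: g_def)
      also have "\<dots> = real p + real (l choose 2) * ((1 / real n) ^ 2 * (real n * c))"
        by (cases "2 \<le> l") (auto simp: binomial_eq_0)
      also have "real (l choose 2) * ((1 / real n) ^ 2 * (real n * c)) = real (l choose 2) * 2 * c / (2 * real n)"
        using n0 by (simp add: field_simps power2_eq_square)
      also have "\<dots> = real p * real l / (2 * real n) * (\<alpha> * (real l - 1) + real l * real p - 2 * real l - real p + 2)"
        unfolding choose2_real c_def by (simp add: field_simps)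
      finally show ?thesis .
    qed
    have eqn: "expectation (\<lambda>w. mat_trace p (mat_pow p (sample_cov Y n w) l))
            - (real p + real p * real l / (2 * real n) * (\<alpha> * (real l - 1) + real l * real p - 2 * real l - real p + 2))
        = (\<Sum>k\<le>l. real (l choose k) * ((1 / real n) ^ k * (e p k n - g k n)))"
      unfolding expect_expand[OF n] gsum[symmetric]
      by (simp only: right_diff_distrib sum_subtractf)
    have "\<bar>\<Sum>k\<le>l. real (l choose k) * ((1 / real n) ^ k * (e p k n - g k n))\<bar> \<le> (\<Sum>k\<le>l. \<bar>real (l choose k) * ((1 / real n) ^ k * (e p k n - g k n))\<bar>)"
      by (rule sum_abs)
    also have "\<dots> \<le> (\<Sum>k\<le>l. real (l choose k) * (real (k ^ 4) * (real p * Cb p k)) * (1 / (real n)^2))"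
    proof (rule sum_mono)
      fix k assume "k \<in> {..l}"
      then have k: "k \<le> l" by simp
      have nn: "0 \<le> real (l choose k) * (real (k ^ 4) * (real p * Cb p k)) * (1 / (real n)^2)"
        using Cb_nonneg by simp
      show "\<bar>real (l choose k) * ((1 / real n) ^ k * (e p k n - g k n))\<bar> \<le> real (l choose k) * (real (k ^ 4) * (real p * Cb p k)) * (1 / (real n)^2)"
      proof (cases "k \<le> 2")
        case True
        then have "k = 0 \<or> k = 1 \<or> k = 2" by auto
        then have "e p k n - g k n = 0"
          using k e_one[of p n] by (auto simp: g_def e_zero e_two c_def alpha)
        then show ?thesis using nn by simp
      next
        case False
        have eb: "\<bar>e p k n\<bar> \<le> real (k ^ 4 * n ^ (k - 2)) * (real p * Cb p k)"
          using e_high[of k] k False by simp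
        have pw: "(1 / real n) ^ k * real n ^ (k - 2) = 1 / (real n)^2"
        proof -
          have kk: "k = (k - 2) + 2" using False by simp
          have "real n ^ k = real n ^ ((k - 2) + 2)" using kk by (rule arg_cong)
          also have "\<dots> = real n ^ (k - 2) * real n ^ 2" by (rule power_add)
          finally have "real n ^ k = real n ^ (k - 2) * real n ^ 2" .
          then show ?thesis using n0 by (simp add: power_one_over field_simps)
        qed
        have "\<bar>real (l choose k) * ((1 / real n) ^ k * (e p k n - g k n))\<bar> = real (l choose k) * ((1 / real n) ^ k * \<bar>e p k n\<bar>)"
          using False by (simp add: g_def abs_mult)
        also have "\<dots> \<le> real (l choose k) * ((1 / real n) ^ k * (real (k ^ 4 * n ^ (k - 2)) * (real p * Cb p k)))"
          using eb by (intro mult_left_mono) auto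
        also have "\<dots> = real (l choose k) * (real (k ^ 4) * (real p * Cb p k)) * ((1 / real n) ^ k * real n ^ (k - 2))"
          by (simp add: algebra_simps)
        also have "\<dots> = real (l choose k) * (real (k ^ 4) * (real p * Cb p k)) * (1 / (real n)^2)"
          by (simp only: pw)
        finally show ?thesis .
      qed
    qed
    also have "\<dots> = K * (1 / (real n)^2)"
      unfolding K_def by (rule sum_distrib_right[symmetric])
    finally show ?thesis unfolding eqn .
  qed
  show ?thesis
  proof (rule bigoI[where c = K])
    show "\<forall>\<^sub>F n in at_top. norm (expectation (\<lambda>w. mat_trace p (mat_pow p (sample_cov Y n w) l))
            - (real p + real p * real l / (2 * real n)
                 * (\<alpha> * (real l - 1) + real l * real p - 2 * real l - real p + 2))) \<le> K * norm (1 / (real n)^2)"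
      using eventually_ge_at_top[of "1::nat"]
    proof eventually_elim
      case (elim n)
      then show ?case using key[OF elim] by simp
    qed
  qed
qed

end

theorem corollary6p4:
  fixes M :: "'a measure" and Y :: "nat \<Rightarrow> nat \<Rightarrow> 'a \<Rightarrow> real"
    and p l :: nat and \<alpha> :: real
  assumes "prob_space M"
    and rv: "\<And>i j. Y i j \<in> borel_measurable M"
    and indep: "prob_space.indep_vars M (\<lambda>_. borel) (\<lambda>(i, j). Y i j) UNIV"
    and ident: "\<And>i j. distr M borel (Y i j) = distr M borel (Y 0 0)"
    and mean: "prob_space.expectation M (Y 0 0) = 0"
    and var: "prob_space.expectation M (\<lambda>w. (Y 0 0 w)^2) = 1"
    and sq_int: "integrable M (\<lambda>w. (Y 0 0 w)^2)"
    and mom: "integrable M (\<lambda>w. (Y 0 0 w)^(2*l))"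
    and alpha: "\<alpha> = prob_space.expectation M (\<lambda>w. (Y 0 0 w)^4)"
  shows "(\<lambda>n. prob_space.expectation M (\<lambda>w. mat_trace p (mat_pow p (sample_cov Y n w) l))
            - (real p + real p * real l / (2 * real n)
                 * (\<alpha> * (real l - 1) + real l * real p - 2 * real l - real p + 2)))
         \<in> O(\<lambda>n. 1 / (real n)^2)"
proof -
  interpret setting M Y l
    by (rule setting.intro[OF assms(1)], unfold_locales) (use assms in auto)
  show ?thesis using final[OF alpha] by simp
qed

end
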